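(* Let $\Omega\subset \mathbb R^{n+m}$ be open and convex, with $\Omega_x$ connected for all $x$. Let $f:\Omega\to \mathbb R$ and suppose there are $\kappa\ge 0$ and $\sigma>0$ such that $(x,y)\mapsto f(x,y) + \frac{\kappa}{2} \|x\|^2-\sigma \|y\|^2$ is convex on $\Omega$, and $\operatorname{argmin}_f(x)$ is non-empty for all $x\in \pi(\Omega)$. Then: (i) the function $g(x):=\inf_{y\in\Omega_x} f(x,y)$, $x\in\pi(\Omega)$, is $\kappa$-semiconvex, and $\operatorname{argmin}_f(x)$ is a single point $\gamma(x)$ for all $x\in\pi(\Omega)$, so that $g(x)=f(x,\gamma(x))$; (ii) given any $x_0\in \pi(\Omega)$ and $u_0\in \nabla_{x_0}^{\kappa} g$ there exists a Lipschitz function $\phi:V\to \mathbb R^m$ defined on a neighbourhood $V$ of $(x_0,u_0)$ in $\mathbb R^{2n}$ such that $\gamma(x) = \phi(x,u)$ for all $(x,u)\in V$ with $u\in \nabla^\kappa_{x} g$; (iii) $\gamma$ is calm almost everywhere: for almost all $x_0\in \pi(\Omega)$ there are $C$ and $\delta>0$ such that $\|\gamma(x) - \gamma(x_0)\| \le C \| x-x_0\|$ whenever $\|x-x_0\|<\delta$.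
   Context: $\pi:\mathbb R^{n+m}\to\mathbb R^n$ is the projection and $\Omega_x=\{y\in\mathbb R^m:(x,y)\in\Omega\}$. For $f:\Omega\to\mathbb R$, $\operatorname{argmin}_f(x)=\{\gamma\in\Omega_x: \inf_{y\in\Omega_x}f(x,y)=f(x,\gamma)\}$ (possibly empty). A function $g$ is $\kappa$-semiconvex if $g(x)+\frac\kappa2\|x\|^2$ is convex. For $g$ defined near $x_0$ and $\kappa\in\mathbb R$, $\nabla^\kappa_{x_0}g=\{u\in\mathbb R^n: g(x)-g(x_0)\ge u\cdot(x-x_0)-\frac\kappa2\|x-x_0\|^2 \text{ for all } x \text{ sufficiently near } x_0\}$. *)

theory Defs
  imports "HOL-Analysis.Analysis"
begin

text \<open>Fibre of \<Omega> over x: \<Omega>_x = {y. (x,y) \<in> \<Omega>}.  \<R>^(n+m) is modelled as 'n \<times> 'm.\<close>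
definition fibre :: "('n \<times> 'm) set \<Rightarrow> 'n \<Rightarrow> 'm set" where
  "fibre \<Omega> x = {y. (x, y) \<in> \<Omega>}"

definition argmin_set :: "('n \<times> 'm \<Rightarrow> real) \<Rightarrow> ('n \<times> 'm) set \<Rightarrow> 'n \<Rightarrow> 'm set" where
  "argmin_set f \<Omega> x = {\<gamma> \<in> fibre \<Omega> x. \<forall>y \<in> fibre \<Omega> x. f (x, \<gamma>) \<le> f (x, y)}"

definition semiconvex_on :: "real \<Rightarrow> 'a::real_normed_vector set \<Rightarrow> ('a \<Rightarrow> real) \<Rightarrow> bool" where
  "semiconvex_on \<kappa> S g \<longleftrightarrow> convex_on S (\<lambda>x. g x + \<kappa> / 2 * (norm x)\<^sup>2)"

definition semi_subdiff :: "real \<Rightarrow> ('a::real_inner \<Rightarrow> real) \<Rightarrow> 'a \<Rightarrow> 'a set" where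
  "semi_subdiff \<kappa> g x0 = {u. \<exists>e>0. \<forall>x. dist x x0 < e \<longrightarrow>
      g x - g x0 \<ge> inner u (x - x0) - \<kappa> / 2 * (norm (x - x0))\<^sup>2}"

end

theory Submission
  imports Defs
begin

lemma slope_swap: "((x::real) - y) / (a - b) = (y - x) / (b - a)"
  by (metis minus_diff_eq minus_divide_divide)

lemma slope_mono:
  fixes f :: "real \<Rightarrow> real"
  assumes f: "convex_on I f" and I: "a \<in> I" "b \<in> I" "c \<in> I" "d \<in> I"
    and "a < b" "c < d" "a \<le> c" "b \<le> d"
  shows "(f b - f a) / (b - a) \<le> (f d - f c) / (d - c)"
proof -
  have s1: "(f b - f a) / (b - a) \<le> (f d - f a) / (d - a)"
  proof (cases "b = d")
    case False
    then have "b < d" using assms by auto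
    from convex_on_slope_le(1)[OF f I(1) I(4) \<open>a<b\<close> this]
    show ?thesis by (simp add: slope_swap)
  qed simp
  have s2: "(f d - f a) / (d - a) \<le> (f d - f c) / (d - c)"
  proof (cases "a = c")
    case False
    then have "a < c" using assms by auto
    from convex_on_slope_le(2)[OF f I(1) I(4) this \<open>c<d\<close>]
    show ?thesis by (simp add: slope_swap)
  qed simp
  from s1 s2 show ?thesis by linarith
qed

lemma disjnt_ball_real:
  fixes a b r s :: real
  assumes "disjnt (ball a r) (ball b s)" "a \<le> b" "r > 0" "s > 0"
  shows "a + r \<le> b - s"
proof (rule ccontr)
  assume nt: "\<not> (a + r \<le> b - s)"
  define x where "x = (s*a + r*b)/(r+s)"
  have "x - a = r*(b-a)/(r+s)" "b - x = s*(b-a)/(r+s)"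
    using assms by (auto simp: x_def field_simps)
  moreover have "r*(b-a) < r*(r+s)" "s*(b-a) < s*(r+s)"
    using assms nt by (simp_all add: mult_strict_left_mono)
  then have "r*(b-a)/(r+s) < r" "s*(b-a)/(r+s) < s"
    using assms by (simp_all add: pos_divide_less_eq)
  moreover have "r*(b-a)/(r+s) \<ge> 0" "s*(b-a)/(r+s) \<ge> 0"
    using assms by auto
  ultimately have "x \<in> ball a r" "x \<in> ball b s"
    by (auto simp: dist_real_def)
  with assms(1) show False by (auto simp: disjnt_def)
qed

lemma telescope:
  fixes \<phi> :: "real \<Rightarrow> real" and F :: "(real \<times> real) set"
  assumes cvx: "convex_on {c-\<eta>..d+\<eta>} \<phi>" and "\<eta> > 0" and "c \<le> d"
    and F: "finite F" "\<And>i. i \<in> F \<Longrightarrow> fst i \<in> {c..d} \<and> 0 < snd i \<and> snd i \<le> \<eta>"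
    and disj: "pairwise (\<lambda>i j. disjnt (ball (fst i) (snd i)) (ball (fst j) (snd j))) F"
  shows "(\<Sum>i\<in>F. (\<phi> (fst i + snd i) - \<phi> (fst i)) / snd i - (\<phi> (fst i) - \<phi> (fst i - snd i)) / snd i)
     \<le> (\<phi> (d+\<eta>) - \<phi> d) / \<eta> - (\<phi> c - \<phi> (c-\<eta>)) / \<eta>"
proof -
  define R where "R i = (\<phi> (fst i + snd i) - \<phi> (fst i)) / snd i" for i
  define L where "L i = (\<phi> (fst i) - \<phi> (fst i - snd i)) / snd i" for i
  define M where "M = (\<phi> (d+\<eta>) - \<phi> d) / \<eta>"
  define m where "m = (\<phi> c - \<phi> (c-\<eta>)) / \<eta>"
  have R_eq: "R i = (\<phi> (fst i + snd i) - \<phi> (fst i)) / ((fst i + snd i) - fst i)" for i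
    by (simp add: R_def)
  have L_eq: "L i = (\<phi> (fst i) - \<phi> (fst i - snd i)) / (fst i - (fst i - snd i))" for i
    by (simp add: L_def)
  have RM: "R i \<le> M" if "i \<in> F" for i
    unfolding R_eq M_def using F(2)[OF that] \<open>\<eta>>0\<close>
    by (intro order.trans[OF slope_mono[OF cvx, of "fst i" "fst i + snd i" d "d+\<eta>"]]) auto
  have mL: "m \<le> L i" if "i \<in> F" for i
    unfolding L_eq m_def using F(2)[OF that] \<open>\<eta>>0\<close>
    by (intro order.trans[OF _ slope_mono[OF cvx, of "c-\<eta>" c "fst i - snd i" "fst i"]]) auto
  have RL: "R i \<le> L j" if "i \<in> F" "j \<in> F" "fst i \<le> fst j" "i \<noteq> j" for i j
  proof -
    have "disjnt (ball (fst i) (snd i)) (ball (fst j) (snd j))"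
      using disj that unfolding pairwise_def by blast
    then have "fst i + snd i \<le> fst j - snd j"
      using disjnt_ball_real F(2) that by blast
    then show ?thesis unfolding R_eq L_eq using F(2)[OF that(1)] F(2)[OF that(2)] \<open>\<eta>>0\<close>
      by (intro slope_mono[OF cvx]) auto
  qed
  have "S \<subseteq> F \<longrightarrow> S \<noteq> {} \<longrightarrow> (\<exists>z\<in>S. (\<Sum>i\<in>S. R i - L i) \<le> R z - m)" if "finite S" for S
    using that
  proof (induction S rule: finite_ranking_induct[where f=fst])
    case empty then show ?case by simp
  next
    case (insert x S)
    show ?case
    proof (intro impI)
      assume sub: "insert x S \<subseteq> F"
      show "\<exists>z\<in>insert x S. (\<Sum>i\<in>insert x S. R i - L i) \<le> R z - m"
      proof (cases "S = {}")
        case True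
        then show ?thesis using mL[of x] sub by auto
      next
        case False
        show ?thesis
        proof (cases "x \<in> S")
          case True
          then have "insert x S = S" by auto
          then show ?thesis using insert sub False by auto
        next
          case xS: False
          from insert(3) sub False obtain z where z: "z \<in> S" "(\<Sum>i\<in>S. R i - L i) \<le> R z - m" by auto
          have "R z \<le> L x" using RL[of z x] z insert(2)[of z] sub xS by auto
          then have "(\<Sum>i\<in>insert x S. R i - L i) \<le> R x - m"
            using z xS insert(1) by (simp add: sum.insert)
          then show ?thesis by auto
        qed
      qed
    qed
  qed
  then have main: "F \<noteq> {} \<Longrightarrow> (\<exists>z\<in>F. (\<Sum>i\<in>F. R i - L i) \<le> R z - m)" using F(1) by blast
  have mM: "m \<le> M"
  proof -
    have "(\<phi> c - \<phi> (c-\<eta>)) / (c - (c-\<eta>)) \<le> (\<phi> (d+\<eta>) - \<phi> d) / ((d+\<eta>) - d)"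
      using \<open>\<eta>>0\<close> \<open>c\<le>d\<close> by (intro slope_mono[OF cvx]) auto
    then show ?thesis by (simp add: m_def M_def)
  qed
  show ?thesis
  proof (cases "F = {}")
    case True then show ?thesis using mM by (simp add: m_def M_def)
  next
    case False
    from main[OF False] obtain z where "z \<in> F" "(\<Sum>i\<in>F. R i - L i) \<le> R z - m" by auto
    with RM[of z] show ?thesis by (simp add: R_def L_def M_def m_def)
  qed
qed

lemma oned_core:
  fixes \<phi> :: "real \<Rightarrow> real"
  assumes cvx: "convex_on {c-\<eta>..d+\<eta>} \<phi>" and "\<eta> > 0" and "c \<le> d"
  shows "negligible {t0 \<in> {c..d}. \<forall>C. \<forall>\<delta>>0. \<exists>t. 0 < t \<and> t < \<delta> \<and>
            C * t\<^sup>2 < \<phi> (t0 + t) + \<phi> (t0 - t) - 2 * \<phi> t0}" (is "negligible ?E")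
proof -
  define R where "R i = (\<phi> (fst i + snd i) - \<phi> (fst i)) / snd i" for i :: "real \<times> real"
  define L where "L i = (\<phi> (fst i) - \<phi> (fst i - snd i)) / snd i" for i :: "real \<times> real"
  define B where "B = (\<phi> (d+\<eta>) - \<phi> d) / \<eta> - (\<phi> c - \<phi> (c-\<eta>)) / \<eta>"
  define E where "E = ?E"
  have Ei: "\<forall>C. \<forall>\<delta>>0. \<exists>t. 0 < t \<and> t < \<delta> \<and> C * t\<^sup>2 < \<phi> (x + t) + \<phi> (x - t) - 2 * \<phi> x"
     "x \<in> {c..d}" if "x \<in> E" for x
    using that unfolding E_def by blast+
  show ?thesis
    unfolding E_def[symmetric] negligible_outer_le
  proof (intro allI impI)
    fix e :: real assume "e > 0"
    define N where "N = 2 * (\<bar>B\<bar> + 1) / e"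
    have "N > 0" using \<open>e>0\<close> by (simp add: N_def)
    define K where "K = {i. fst i \<in> E \<and> 0 < snd i \<and> snd i < \<eta> \<and>
        N * (snd i)\<^sup>2 < \<phi> (fst i + snd i) + \<phi> (fst i - snd i) - 2 * \<phi> (fst i)}"
    have cover: "\<exists>i. i \<in> K \<and> x \<in> ball (fst i) (snd i) \<and> snd i < d" if "x \<in> E" "0 < d" for x d
    proof -
      from Ei(1)[OF that(1)] have "\<forall>C. \<forall>\<delta>>0. \<exists>t. 0 < t \<and> t < \<delta> \<and> C * t\<^sup>2 < \<phi> (x + t) + \<phi> (x - t) - 2 * \<phi> x"
        by simp
      then have H: "\<And>\<delta>. \<delta> > 0 \<Longrightarrow> \<exists>t. 0 < t \<and> t < \<delta> \<and> N * t\<^sup>2 < \<phi> (x + t) + \<phi> (x - t) - 2 * \<phi> x"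
        by blast
      have "\<exists>t. 0 < t \<and> t < min d \<eta> \<and> N * t\<^sup>2 < \<phi> (x + t) + \<phi> (x - t) - 2 * \<phi> x"
        using \<open>\<eta>>0\<close> that(2) by (intro H) simp
      then obtain t where t: "0 < t" "t < min d \<eta>"
        "N * t\<^sup>2 < \<phi> (x + t) + \<phi> (x - t) - 2 * \<phi> x" by blast
      show ?thesis
        by (rule exI[of _ "(x, t)"]) (use t that in \<open>simp add: K_def\<close>)
    qed
    have Kmem: "fst i \<in> {c..d} \<and> 0 < snd i \<and> snd i \<le> \<eta>" if "i \<in> K" for i
      using that Ei(2) unfolding K_def by auto
    obtain C where C: "countable C" "C \<subseteq> K"
      "pairwise (\<lambda>i j. disjnt (ball (fst i) (snd i)) (ball (fst j) (snd j))) C"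
      "negligible (E - (\<Union>i\<in>C. ball (fst i) (snd i)))"
      using Vitali_covering_theorem_balls[of E K fst snd, OF cover] by blast
    define U' where "U' = (\<Union>i\<in>C. ball (fst i) (snd i))"
    have Kprop: "2 * snd i \<le> 2 / N * (R i - L i)" if "i \<in> K" for i
    proof -
      have "0 < snd i" using that by (simp add: K_def)
      have "snd i * (R i - L i) = \<phi> (fst i + snd i) + \<phi> (fst i - snd i) - 2 * \<phi> (fst i)"
        using \<open>0 < snd i\<close> by (simp add: R_def L_def diff_divide_distrib[symmetric])
      then have "N * (snd i)\<^sup>2 < snd i * (R i - L i)"
        using that by (simp add: K_def)
      then have "snd i * (N * snd i) < snd i * (R i - L i)" by (simp add: power2_eq_square mult_ac)
      then have "N * snd i < R i - L i" using mult_less_cancel_left_pos[OF \<open>0 < snd i\<close>] by blast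
      then show ?thesis using \<open>N>0\<close> by (simp add: field_simps)
    qed
    have bound: "measure lebesgue (\<Union>i\<in>I. ball (fst i) (snd i)) \<le> 2 / N * B"
      if "I \<subseteq> C" "finite I" for I
    proof -
      have "measure lebesgue (\<Union>i\<in>I. ball (fst i) (snd i)) \<le> (\<Sum>i\<in>I. measure lebesgue (ball (fst i) (snd i)))"
        by (rule measure_UNION_le) (use that in auto)
      also have "\<dots> = (\<Sum>i\<in>I. 2 * snd i)"
        using that C(2) by (intro sum.cong) (auto simp: K_def ball_eq_greaterThanLessThan measure_def)
      also have "\<dots> \<le> (\<Sum>i\<in>I. 2 / N * (R i - L i))"
        using that C(2) Kprop by (intro sum_mono) auto
      also have "\<dots> = 2 / N * (\<Sum>i\<in>I. R i - L i)"
        by (simp add: sum_distrib_left)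
      also have "\<dots> \<le> 2 / N * B"
      proof -
        have "(\<Sum>i\<in>I. R i - L i) \<le> B"
          unfolding R_def L_def B_def
          by (rule telescope[OF cvx \<open>\<eta>>0\<close> \<open>c\<le>d\<close> \<open>finite I\<close>])
             (use Kmem C(2) that(1) pairwise_subset[OF C(3) that(1)] in blast)+
        then show ?thesis using \<open>N>0\<close> by (intro mult_left_mono) auto
      qed
      finally show ?thesis .
    qed
    have U'm: "U' \<in> lmeasurable" "measure lebesgue U' \<le> 2 / N * B"
      unfolding U'_def
      by (rule fmeasurable_UN_bound[OF C(1) _ bound], simp, assumption+)
         (rule measure_UN_bound[OF C(1) _ bound], simp, assumption+)
    have Em: "E - U' \<in> lmeasurable" "measure lebesgue (E - U') = 0"
      unfolding U'_def
      by (rule negligible_imp_measurable[OF C(4)]) (rule negligible_imp_measure0[OF C(4)])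
    have "2 / N * B \<le> e"
    proof -
      have "2 / N * B = B * e / (\<bar>B\<bar> + 1)" using \<open>e>0\<close> by (simp add: N_def field_simps)
      also have "\<dots> \<le> e" using \<open>e>0\<close> 
      proof -
        have "B * e \<le> (\<bar>B\<bar> + 1) * e" using \<open>e>0\<close> by (intro mult_right_mono) auto
        moreover have pos: "0 < \<bar>B\<bar> + 1" by simp
        ultimately show ?thesis by (simp add: pos_divide_le_eq[OF pos] mult.commute)
      qed
      finally show ?thesis .
    qed
    moreover have "measure lebesgue ((E - U') \<union> U') \<le> measure lebesgue (E - U') + measure lebesgue U'"
      using Em U'm by (intro measure_Un_le) auto
    moreover have "E \<subseteq> (E - U') \<union> U'" by blast
    moreover have "(E - U') \<union> U' \<in> lmeasurable" using Em(1) U'm(1) by (rule fmeasurable.Un)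
    ultimately show "\<exists>T. E \<subseteq> T \<and> T \<in> lmeasurable \<and> measure lebesgue T \<le> e"
      using Em(2) U'm(2) by (intro exI[of _ "(E - U') \<union> U'"]) linarith
  qed
qed

lemma oned_global:
  fixes \<phi> :: "real \<Rightarrow> real" and I :: "real set"
  assumes "open I" and cvx: "convex_on I \<phi>"
  shows "negligible {t \<in> I. \<not> (\<exists>C \<delta>. \<delta> > 0 \<and> (\<forall>s. \<bar>s\<bar> < \<delta> \<longrightarrow>
            \<phi> (t + s) + \<phi> (t - s) - 2 * \<phi> t \<le> C * s\<^sup>2))}" (is "negligible ?S")
proof (rule locally_negligible_alt[THEN iffD2], rule ballI)
  fix t0 assume "t0 \<in> ?S"
  then have "t0 \<in> I" by simp
  then obtain r where "r > 0" "ball t0 r \<subseteq> I" using \<open>open I\<close> open_contains_ball by blast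
  define \<epsilon> where "\<epsilon> = r / 3"
  have "\<epsilon> > 0" using \<open>r>0\<close> by (simp add: \<epsilon>_def)
  have sub: "{(t0 - \<epsilon>) - \<epsilon> .. (t0 + \<epsilon>) + \<epsilon>} \<subseteq> I"
  proof
    fix x assume "x \<in> {(t0 - \<epsilon>) - \<epsilon> .. (t0 + \<epsilon>) + \<epsilon>}"
    then have "x \<in> ball t0 r" using \<open>r>0\<close> by (simp add: \<epsilon>_def dist_real_def abs_less_iff)
    then show "x \<in> I" using \<open>ball t0 r \<subseteq> I\<close> by (rule subsetD[rotated])
  qed
  have cv2: "convex_on {(t0 - \<epsilon>) - \<epsilon> .. (t0 + \<epsilon>) + \<epsilon>} \<phi>"
    by (rule convex_on_subset[OF cvx sub]) simp
  have core: "negligible {t \<in> {t0 - \<epsilon> .. t0 + \<epsilon>}. \<forall>C. \<forall>\<delta>>0. \<exists>s. 0 < s \<and> s < \<delta> \<and>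
            C * s\<^sup>2 < \<phi> (t + s) + \<phi> (t - s) - 2 * \<phi> t}"
    by (rule oned_core[OF cv2 \<open>\<epsilon>>0\<close>]) (use \<open>\<epsilon>>0\<close> in simp)
  have "?S \<inter> ball t0 \<epsilon> \<subseteq> {t \<in> {t0 - \<epsilon> .. t0 + \<epsilon>}. \<forall>C. \<forall>\<delta>>0. \<exists>s. 0 < s \<and> s < \<delta> \<and>
            C * s\<^sup>2 < \<phi> (t + s) + \<phi> (t - s) - 2 * \<phi> t}"
  proof
    fix t assume t: "t \<in> ?S \<inter> ball t0 \<epsilon>"
    have "t \<in> ball t0 \<epsilon>" using t by (rule IntD2)
    then have "t \<in> {t0 - \<epsilon> .. t0 + \<epsilon>}" by (auto simp: dist_real_def)
    moreover have "\<exists>s. 0 < s \<and> s < \<delta> \<and> C * s\<^sup>2 < \<phi> (t + s) + \<phi> (t - s) - 2 * \<phi> t"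
      if "\<delta> > 0" for C \<delta>
    proof -
      from IntD1[OF t] have ng: "\<not> (\<exists>C \<delta>. \<delta> > 0 \<and> (\<forall>s. \<bar>s\<bar> < \<delta> \<longrightarrow>
            \<phi> (t + s) + \<phi> (t - s) - 2 * \<phi> t \<le> C * s\<^sup>2))" by simp
      have "\<not> (\<forall>s. \<bar>s\<bar> < \<delta> \<longrightarrow> \<phi> (t + s) + \<phi> (t - s) - 2 * \<phi> t \<le> C * s\<^sup>2)"
      proof
        assume "\<forall>s. \<bar>s\<bar> < \<delta> \<longrightarrow> \<phi> (t + s) + \<phi> (t - s) - 2 * \<phi> t \<le> C * s\<^sup>2"
        with that have "\<exists>C \<delta>. \<delta> > 0 \<and> (\<forall>s. \<bar>s\<bar> < \<delta> \<longrightarrow>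
            \<phi> (t + s) + \<phi> (t - s) - 2 * \<phi> t \<le> C * s\<^sup>2)" by (intro exI conjI)
        with ng show False by contradiction
      qed
      then obtain s where "\<not> (\<bar>s\<bar> < \<delta> \<longrightarrow> \<phi> (t + s) + \<phi> (t - s) - 2 * \<phi> t \<le> C * s\<^sup>2)"
        by blast
      then have s: "\<bar>s\<bar> < \<delta>" "C * s\<^sup>2 < \<phi> (t + s) + \<phi> (t - s) - 2 * \<phi> t"
        by (simp_all add: not_le)
      have "s \<noteq> 0" using s by auto
      have "\<phi> (t + \<bar>s\<bar>) + \<phi> (t - \<bar>s\<bar>) = \<phi> (t + s) + \<phi> (t - s)"
        by (cases "s \<ge> 0") auto
      then show ?thesis using s \<open>s \<noteq> 0\<close>
        by (intro exI[of _ "\<bar>s\<bar>"]) auto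
    qed
    ultimately show "t \<in> {t \<in> {t0 - \<epsilon> .. t0 + \<epsilon>}. \<forall>C. \<forall>\<delta>>0. \<exists>s. 0 < s \<and> s < \<delta> \<and>
            C * s\<^sup>2 < \<phi> (t + s) + \<phi> (t - s) - 2 * \<phi> t}" by blast
  qed
  then have "negligible (?S \<inter> ball t0 \<epsilon>)" using core negligible_subset by blast
  moreover have "openin (top_of_set ?S) (?S \<inter> ball t0 \<epsilon>)" by (rule openin_open_Int) simp
  moreover have "t0 \<in> ?S \<inter> ball t0 \<epsilon>" using \<open>t0 \<in> ?S\<close> \<open>\<epsilon>>0\<close> by (intro IntI) simp_all
  ultimately show "\<exists>U. openin (top_of_set ?S) U \<and> t0 \<in> U \<and> negligible U" by blast
qed


lemma line_null:
  fixes S :: "'a::euclidean_space set" and b :: 'a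
  assumes S: "S \<in> sets borel" and sl: "\<And>x. negligible {t::real. x + t *\<^sub>R b \<in> S}"
  shows "S \<in> null_sets lborel"
proof -
  define T where "T = {p :: 'a \<times> real. snd p \<in> {0..1} \<and> fst p + snd p *\<^sub>R b \<in> S}"
  have Tb: "T \<in> sets (borel :: ('a \<times> real) measure)"
  proof -
    have f: "(\<lambda>p::'a\<times>real. fst p + snd p *\<^sub>R b) \<in> borel_measurable borel"
      by (intro borel_measurable_continuous_onI continuous_intros)
    have g: "(\<lambda>p::'a\<times>real. snd p) \<in> borel_measurable borel"
      by (intro borel_measurable_continuous_onI continuous_intros)
    have "T = ((\<lambda>p::'a\<times>real. fst p + snd p *\<^sub>R b) -` S \<inter> space borel) \<inter> ((\<lambda>p::'a\<times>real. snd p) -` {0..1} \<inter> space borel)"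
      by (auto simp: T_def)
    then show ?thesis using measurable_sets[OF f S] measurable_sets[OF g, of "{0..1}"] by auto
  qed
  have sets_eq: "sets (lborel \<Otimes>\<^sub>M lborel) = sets (borel :: ('a \<times> real) measure)"
    unfolding lborel_prod by simp
  have Tm: "T \<in> sets (lborel \<Otimes>\<^sub>M lborel)" using Tb sets_eq by simp
  have slice0: "emeasure lborel (Pair x -` T) = 0" for x
  proof -
    have sub: "Pair x -` T \<subseteq> {t::real. x + t *\<^sub>R b \<in> S}" by (auto simp: T_def)
    have "negligible (Pair x -` T)" using negligible_subset[OF sl sub] .
    moreover have "Pair x -` T \<in> sets borel"
    proof -
      have f: "(\<lambda>t::real. x + t *\<^sub>R b) \<in> borel_measurable borel"
        by (intro borel_measurable_continuous_onI continuous_intros)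
      have "Pair x -` T = ((\<lambda>t::real. x + t *\<^sub>R b) -` S \<inter> space borel) \<inter> {0..1}"
        by (auto simp: T_def)
      then show ?thesis using measurable_sets[OF f S] by auto
    qed
    ultimately have "Pair x -` T \<in> null_sets lborel"
      using negligible_iff_null_sets null_sets_completion_iff by (metis sets_lborel)
    then show ?thesis by auto
  qed
  have "emeasure (lborel \<Otimes>\<^sub>M lborel) T = (\<integral>\<^sup>+x. emeasure lborel (Pair x -` T) \<partial>lborel)"
    by (rule lborel.emeasure_pair_measure_alt[OF Tm])
  also have "\<dots> = 0" by (simp add: slice0)
  finally have z: "emeasure (lborel \<Otimes>\<^sub>M lborel) T = 0" .
  have slice1: "emeasure lborel ((\<lambda>x. (x, t)) -` T) = emeasure lborel S * indicator {0..1} t" for t :: real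
  proof (cases "t \<in> {0..1}")
    case True
    have "(\<lambda>x. (x, t)) -` T = (+) (t *\<^sub>R b) -` S"
      using True by (auto simp: T_def add.commute)
    moreover have "emeasure lborel ((+) (t *\<^sub>R b) -` S) = emeasure lborel S"
    proof -
      have "emeasure lborel S = emeasure (distr lborel borel ((+) (t *\<^sub>R b))) S"
        by (simp add: lborel_distr_plus)
      also have "\<dots> = emeasure lborel ((+) (t *\<^sub>R b) -` S \<inter> space lborel)"
        by (rule emeasure_distr) (use S in auto)
      finally show ?thesis by simp
    qed
    ultimately show ?thesis using True by simp
  next
    case False
    then have "(\<lambda>x. (x, t)) -` T = {}" by (auto simp: T_def)
    then show ?thesis using False by simp
  qed
  have "emeasure (lborel \<Otimes>\<^sub>M lborel) T = (\<integral>\<^sup>+t. emeasure lborel ((\<lambda>x. (x, t)) -` T) \<partial>lborel)"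
    by (rule lborel_pair.emeasure_pair_measure_alt2[OF Tm])
  also have "\<dots> = (\<integral>\<^sup>+t. emeasure lborel S * indicator {0..1::real} t \<partial>lborel)"
    by (rule nn_integral_cong) (rule slice1)
  also have "\<dots> = emeasure lborel S"
    by (subst nn_integral_cmult_indicator) auto
  finally have "emeasure lborel S = 0" using z by simp
  then show ?thesis using S by (auto intro: null_setsI)
qed


lemma lipschitz_extend:
  fixes \<psi> :: "'a::metric_space \<Rightarrow> 'b::euclidean_space"
  assumes lip: "L-lipschitz_on D \<psi>"
  shows "\<exists>\<phi>. (real DIM('b) * L)-lipschitz_on UNIV \<phi> \<and> (\<forall>z\<in>D. \<phi> z = \<psi> z)"
proof (cases "D = {}")
  case True
  have "L \<ge> 0" using lipschitz_on_nonneg[OF lip] .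
  then show ?thesis using True
    by (intro exI[of _ "\<lambda>_. 0"]) (auto intro!: lipschitz_onI)
next
  case False
  have L0: "L \<ge> 0" using lipschitz_on_nonneg[OF lip] .
  define c where "c b z = (INF s\<in>D. \<psi> s \<bullet> b + L * dist z s)" for b z
  have compl: "\<bar>\<psi> s \<bullet> b - \<psi> s' \<bullet> b\<bar> \<le> L * dist s s'" if "b \<in> Basis" "s \<in> D" "s' \<in> D" for b s s'
  proof -
    have "\<bar>\<psi> s \<bullet> b - \<psi> s' \<bullet> b\<bar> = \<bar>(\<psi> s - \<psi> s') \<bullet> b\<bar>" by (simp add: inner_diff_left)
    also have "\<dots> \<le> norm (\<psi> s - \<psi> s')" using Basis_le_norm[OF that(1)] .
    also have "\<dots> \<le> L * dist s s'" using lipschitz_onD[OF lip that(2,3)] by (simp add: dist_norm)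
    finally show ?thesis .
  qed
  obtain s0 where s0: "s0 \<in> D" using False by blast
  have bdd: "bdd_below ((\<lambda>s. \<psi> s \<bullet> b + L * dist z s) ` D)" if "b \<in> Basis" for b z
  proof (rule bdd_belowI2)
    fix s assume s: "s \<in> D"
    have "\<psi> s0 \<bullet> b - L * dist s s0 \<le> \<psi> s \<bullet> b" using compl[OF that s s0] by linarith
    moreover have "L * dist s s0 \<le> L * dist z s + L * dist z s0"
      using L0 dist_triangle3[of s s0 z] by (simp add: distrib_left[symmetric] mult_left_mono dist_commute)
    ultimately show "\<psi> s0 \<bullet> b - L * dist z s0 \<le> \<psi> s \<bullet> b + L * dist z s" by linarith
  qed
  have ceq: "c b z = \<psi> z \<bullet> b" if "b \<in> Basis" "z \<in> D" for b z
    unfolding c_def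
  proof (rule antisym)
    show "(INF s\<in>D. \<psi> s \<bullet> b + L * dist z s) \<le> \<psi> z \<bullet> b"
      using cINF_lower[OF bdd[OF that(1), of z] that(2)] by simp
    show "\<psi> z \<bullet> b \<le> (INF s\<in>D. \<psi> s \<bullet> b + L * dist z s)"
    proof (rule cINF_greatest[OF False])
      fix s assume "s \<in> D"
      then show "\<psi> z \<bullet> b \<le> \<psi> s \<bullet> b + L * dist z s"
        using compl[OF that(1) that(2) \<open>s\<in>D\<close>] by (simp add: dist_commute)
    qed
  qed
  have clip: "c b z \<le> c b z' + L * dist z z'" if "b \<in> Basis" for b z z'
  proof -
    have "c b z - L * dist z z' \<le> c b z'"
      unfolding c_def
    proof (rule cINF_greatest[OF False])
      fix s assume "s \<in> D"
      have "(INF s\<in>D. \<psi> s \<bullet> b + L * dist z s) \<le> \<psi> s \<bullet> b + L * dist z s"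
        by (rule cINF_lower[OF bdd[OF that] \<open>s\<in>D\<close>])
      moreover have "L * dist z s \<le> L * dist z' s + L * dist z z'"
        using L0 dist_triangle[of z s z'] by (simp add: distrib_left[symmetric] mult_left_mono dist_commute add.commute)
      ultimately show "(INF s\<in>D. \<psi> s \<bullet> b + L * dist z s) - L * dist z z' \<le> \<psi> s \<bullet> b + L * dist z' s"
        by linarith
    qed
    then show ?thesis by linarith
  qed
  have cabs: "\<bar>c b z - c b z'\<bar> \<le> L * dist z z'" if "b \<in> Basis" for b z z'
    using clip[OF that, of z z'] clip[OF that, of z' z] by (simp add: dist_commute abs_le_iff)
  define \<phi> where "\<phi> z = (\<Sum>b\<in>Basis. c b z *\<^sub>R b)" for z
  have "(real DIM('b) * L)-lipschitz_on UNIV \<phi>"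
  proof (rule lipschitz_onI)
    fix z z' :: 'a
    have "dist (\<phi> z) (\<phi> z') = norm (\<Sum>b\<in>Basis. (c b z - c b z') *\<^sub>R b)"
      by (simp add: \<phi>_def dist_norm sum_subtractf scaleR_diff_left)
    also have "\<dots> \<le> (\<Sum>b\<in>Basis. norm ((c b z - c b z') *\<^sub>R b))" by (rule norm_sum)
    also have "\<dots> = (\<Sum>b\<in>Basis. \<bar>c b z - c b z'\<bar>)" by simp
    also have "\<dots> \<le> (\<Sum>b\<in>(Basis::'b set). L * dist z z')" by (rule sum_mono) (rule cabs)
    also have "\<dots> = real DIM('b) * L * dist z z'" by simp
    finally show "dist (\<phi> z) (\<phi> z') \<le> real DIM('b) * L * dist z z'" .
  qed (use L0 in simp)
  moreover have "\<forall>z\<in>D. \<phi> z = \<psi> z"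
  proof
    fix z assume "z \<in> D"
    then have "\<phi> z = (\<Sum>b\<in>Basis. (\<psi> z \<bullet> b) *\<^sub>R b)" by (simp add: \<phi>_def ceq)
    also have "\<dots> = \<psi> z" by (rule euclidean_representation)
    finally show "\<phi> z = \<psi> z" .
  qed
  ultimately show ?thesis by blast
qed


lemma cross_polytope:
  fixes w :: "'a::euclidean_space \<Rightarrow> real"
  assumes cv: "convex_on (ball 0 r) w" and C: "C \<ge> 0"
    and ax: "\<And>b t. b \<in> Basis \<Longrightarrow> \<bar>t\<bar> < r \<Longrightarrow> w (t *\<^sub>R b) \<le> C * t\<^sup>2"
    and z: "real DIM('a) * norm z < r"
  shows "w z \<le> C * (real DIM('a))\<^sup>2 * (norm z)\<^sup>2"
proof -
  define s where "s = (\<Sum>b\<in>Basis. \<bar>z \<bullet> b\<bar>)"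
  have s0: "s \<ge> 0" by (simp add: s_def sum_nonneg)
  have sle: "s \<le> real DIM('a) * norm z"
  proof -
    have "s \<le> (\<Sum>b\<in>(Basis::'a set). norm z)" unfolding s_def
      by (rule sum_mono) (rule Basis_le_norm)
    then show ?thesis by simp
  qed
  have sr: "s < r" using sle z by linarith
  have r0: "r > 0" using z by (smt (verit) norm_ge_zero mult_nonneg_nonneg of_nat_0_le_iff)
  have bound: "w z \<le> C * s\<^sup>2"
  proof (cases "s = 0")
    case True
    then have "\<forall>b\<in>Basis. z \<bullet> b = 0" unfolding s_def by (simp add: sum_nonneg_eq_0_iff)
    then have "z = 0" by (simp add: euclidean_all_zero_iff)
    obtain b :: 'a where b: "b \<in> Basis" using nonempty_Basis by blast
    have "w ((0::real) *\<^sub>R b) \<le> C * 0\<^sup>2" by (rule ax[OF b]) (use r0 in simp)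
    then show ?thesis using \<open>z = 0\<close> True by simp
  next
    case False
    then have spos: "s > 0" using s0 by simp
    define a where "a b = \<bar>z \<bullet> b\<bar> / s" for b
    define y where "y b = (sgn (z \<bullet> b) * s) *\<^sub>R b" for b
    have zsum: "z = (\<Sum>b\<in>Basis. a b *\<^sub>R y b)"
    proof -
      have "a b *\<^sub>R y b = (z \<bullet> b) *\<^sub>R b" for b
        using spos by (simp add: a_def y_def sgn_mult_abs mult.commute[of "\<bar>_\<bar>"])
      then show ?thesis by (simp add: euclidean_representation)
    qed
    have asum: "(\<Sum>b\<in>Basis. a b) = 1" using spos
      by (simp add: a_def s_def sum_divide_distrib[symmetric])
    have yin: "y b \<in> ball 0 r" if "b \<in> Basis" for b
    proof -
      have "norm (y b) = \<bar>sgn (z \<bullet> b)\<bar> * s" using that spos by (simp add: y_def abs_mult)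
      also have "\<dots> \<le> s" using s0 by (cases "z \<bullet> b = 0") (auto simp: abs_sgn)
      finally show ?thesis using sr by simp
    qed
    have wy: "w (y b) \<le> C * s\<^sup>2" if "b \<in> Basis" for b
    proof -
      have sg: "\<bar>sgn (z \<bullet> b)\<bar> \<le> 1" by (simp add: sgn_if)
      have "\<bar>sgn (z \<bullet> b) * s\<bar> = \<bar>sgn (z \<bullet> b)\<bar> * s" using s0 by (simp only: abs_mult abs_of_nonneg)
      also have "\<dots> \<le> 1 * s" using sg s0 by (rule mult_right_mono)
      finally have "\<bar>sgn (z \<bullet> b) * s\<bar> < r" using sr by simp
      then have "w (y b) \<le> C * (sgn (z \<bullet> b) * s)\<^sup>2" unfolding y_def by (rule ax[OF that])
      also have "\<dots> \<le> C * s\<^sup>2"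
        using C by (intro mult_left_mono) (auto simp: power_mult_distrib sgn_if)
      finally show ?thesis .
    qed
    have "w z \<le> (\<Sum>b\<in>Basis. a b * w (y b))"
      unfolding zsum
    proof (rule convex_on_sum[OF _ _ cv asum])
      show "\<And>i. i \<in> Basis \<Longrightarrow> 0 \<le> a i" using spos by (simp add: a_def)
      show "\<And>i. i \<in> Basis \<Longrightarrow> y i \<in> ball 0 r" by (rule yin)
    qed auto
    also have "\<dots> \<le> (\<Sum>b\<in>Basis. a b * (C * s\<^sup>2))"
    proof (rule sum_mono)
      fix b :: 'a assume "b \<in> Basis"
      have "0 \<le> a b" using spos by (simp add: a_def)
      with wy[OF \<open>b \<in> Basis\<close>] show "a b * w (y b) \<le> a b * (C * s\<^sup>2)" by (rule mult_left_mono)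
    qed
    also have "\<dots> = C * s\<^sup>2" by (simp add: sum_distrib_right[symmetric] asum)
    finally show ?thesis .
  qed
  also have "C * s\<^sup>2 \<le> C * (real DIM('a) * norm z)\<^sup>2"
    using C s0 sle by (intro mult_left_mono power_mono) auto
  finally show ?thesis by (simp add: power_mult_distrib mult.assoc)
qed


lemma norm_convex_identity:
  fixes a b :: "'a::real_inner"
  shows "(norm ((1 - t) *\<^sub>R a + t *\<^sub>R b))\<^sup>2
       = (1 - t) * (norm a)\<^sup>2 + t * (norm b)\<^sup>2 - t * (1 - t) * (norm (a - b))\<^sup>2"
  by (simp add: power2_norm_eq_inner inner_add_left inner_add_right inner_diff_left inner_diff_right
      inner_commute algebra_simps)

lemma half_half: fixes v :: "'a::real_vector" shows "(1/2::real) *\<^sub>R v + (1/2::real) *\<^sub>R v = v"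
proof -
  have "(1/2::real) *\<^sub>R v + (1/2) *\<^sub>R v = (1/2 + 1/2) *\<^sub>R v" by (rule scaleR_add_left[symmetric])
  then show ?thesis by simp
qed

lemma third_third: fixes v :: "'a::real_vector"
  shows "v = (1/3::real) *\<^sub>R v + ((1/3::real) *\<^sub>R v + (1/3::real) *\<^sub>R v)"
proof -
  have "(1/3::real) *\<^sub>R v + ((1/3::real) *\<^sub>R v + (1/3::real) *\<^sub>R v) = (1/3 + (1/3 + 1/3)) *\<^sub>R v"
    by (simp only: scaleR_add_left)
  then show ?thesis by simp
qed

lemma norm_sq_shift:
  fixes x d :: "'a::real_inner"
  shows "(norm (x + d))\<^sup>2 = (norm x)\<^sup>2 + 2 * inner x d + (norm d)\<^sup>2"
  by (simp add: power2_norm_eq_inner inner_add_left inner_add_right inner_commute)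

definition gfun :: "('n \<times> 'm) set \<Rightarrow> ('n \<times> 'm \<Rightarrow> real) \<Rightarrow> 'n \<Rightarrow> real" where
  "gfun \<Omega> f x = (INF y \<in> fibre \<Omega> x. f (x, y))"

definition Gfun :: "('n \<times> 'm) set \<Rightarrow> ('n \<times> 'm \<Rightarrow> real) \<Rightarrow> real \<Rightarrow> 'n::real_normed_vector \<Rightarrow> real" where
  "Gfun \<Omega> f \<kappa> x = gfun \<Omega> f x + \<kappa> / 2 * (norm x)\<^sup>2"

definition gam :: "('n \<times> 'm) set \<Rightarrow> ('n \<times> 'm \<Rightarrow> real) \<Rightarrow> 'n \<Rightarrow> 'm" where
  "gam \<Omega> f x = (SOME y. y \<in> argmin_set f \<Omega> x)"

context
  fixes \<Omega> :: "('n::euclidean_space \<times> 'm::euclidean_space) set"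
    and f :: "'n \<times> 'm \<Rightarrow> real"
    and \<kappa> \<sigma> :: real
  assumes opn: "open \<Omega>" and cvx: "convex \<Omega>"
    and kpos: "\<kappa> \<ge> 0" and spos: "\<sigma> > 0"
    and Fc: "convex_on \<Omega> (\<lambda>(x, y). f (x, y) + \<kappa> / 2 * (norm x)\<^sup>2 - \<sigma> * (norm y)\<^sup>2)"
    and ne: "\<forall>x \<in> fst ` \<Omega>. argmin_set f \<Omega> x \<noteq> {}"
begin

abbreviation "UU \<equiv> fst ` \<Omega>"
abbreviation "gg \<equiv> gfun \<Omega> f"
abbreviation "GG \<equiv> Gfun \<Omega> f \<kappa>"
abbreviation "gm \<equiv> gam \<Omega> f"
abbreviation "HH \<equiv> (\<lambda>x y. f (x, y) + \<kappa> / 2 * (norm x)\<^sup>2)"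

lemma U_open: "open UU" using opn by (rule open_image_fst)

lemma U_convex: "convex UU"
  by (rule convex_linear_image[OF _ cvx]) (simp add: bounded_linear.linear[OF bounded_linear_fst])

lemma gam_mem: "x \<in> UU \<Longrightarrow> gm x \<in> argmin_set f \<Omega> x"
  unfolding gam_def using ne by (metis ex_in_conv someI_ex)

lemma gam_in: "x \<in> UU \<Longrightarrow> (x, gm x) \<in> \<Omega>"
  using gam_mem by (auto simp: argmin_set_def fibre_def)

lemma gam_min: "x \<in> UU \<Longrightarrow> (x, y) \<in> \<Omega> \<Longrightarrow> f (x, gm x) \<le> f (x, y)"
  using gam_mem by (auto simp: argmin_set_def fibre_def)

lemma g_eq: "x \<in> UU \<Longrightarrow> gg x = f (x, gm x)"
proof -
  assume x: "x \<in> UU"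
  have mem: "gm x \<in> fibre \<Omega> x" using gam_in[OF x] by (simp add: fibre_def)
  have bdd: "bdd_below ((\<lambda>y. f (x, y)) ` fibre \<Omega> x)"
    using gam_min[OF x] by (auto simp: fibre_def bdd_below_def)
  show ?thesis unfolding gfun_def
  proof (rule antisym)
    show "(INF y \<in> fibre \<Omega> x. f (x, y)) \<le> f (x, gm x)" by (rule cINF_lower[OF bdd mem])
    show "f (x, gm x) \<le> (INF y \<in> fibre \<Omega> x. f (x, y))"
      using mem gam_min[OF x] by (intro cINF_greatest) (auto simp: fibre_def)
  qed
qed

lemma g_le: "(x, y) \<in> \<Omega> \<Longrightarrow> gg x \<le> f (x, y)"
proof -
  assume xy: "(x, y) \<in> \<Omega>"
  then have x: "x \<in> UU" by force
  show ?thesis using g_eq[OF x] gam_min[OF x xy] by simp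
qed

lemma G_eq: "x \<in> UU \<Longrightarrow> GG x = HH x (gm x)"
  by (simp add: Gfun_def g_eq)

lemma G_le: "(x, y) \<in> \<Omega> \<Longrightarrow> GG x \<le> HH x y"
  using g_le by (simp add: Gfun_def)

lemma strong:
  assumes z1: "(x1, y1) \<in> \<Omega>" and z2: "(x2, y2) \<in> \<Omega>" and t: "0 \<le> (t::real)" "t \<le> 1"
  shows "HH ((1 - t) *\<^sub>R x1 + t *\<^sub>R x2) ((1 - t) *\<^sub>R y1 + t *\<^sub>R y2)
     \<le> (1 - t) * HH x1 y1 + t * HH x2 y2 - \<sigma> * t * (1 - t) * (norm (y1 - y2))\<^sup>2"
proof -
  let ?F = "\<lambda>(x, y). f (x, y) + \<kappa> / 2 * (norm x)\<^sup>2 - \<sigma> * (norm y)\<^sup>2"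
  have "?F ((1 - t) *\<^sub>R (x1, y1) + t *\<^sub>R (x2, y2)) \<le> (1 - t) * ?F (x1, y1) + t * ?F (x2, y2)"
    using convex_onD[OF Fc t z1 z2] .
  then have "HH ((1 - t) *\<^sub>R x1 + t *\<^sub>R x2) ((1 - t) *\<^sub>R y1 + t *\<^sub>R y2)
      - \<sigma> * (norm ((1 - t) *\<^sub>R y1 + t *\<^sub>R y2))\<^sup>2
      \<le> (1 - t) * (HH x1 y1 - \<sigma> * (norm y1)\<^sup>2) + t * (HH x2 y2 - \<sigma> * (norm y2)\<^sup>2)"
    by simp
  then show ?thesis unfolding norm_convex_identity by (simp add: algebra_simps)
qed

lemma mid_in: "(x1, y1) \<in> \<Omega> \<Longrightarrow> (x2, y2) \<in> \<Omega> \<Longrightarrow> 0 \<le> (t::real) \<Longrightarrow> t \<le> 1 \<Longrightarrow>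
   ((1 - t) *\<^sub>R x1 + t *\<^sub>R x2, (1 - t) *\<^sub>R y1 + t *\<^sub>R y2) \<in> \<Omega>"
  using convexD_alt[OF cvx, of "(x1, y1)" "(x2, y2)" t] by (simp add: algebra_simps)

lemma G_convex: "convex_on UU GG"
proof (rule convex_onI[OF _ U_convex])
  fix t :: real and x1 x2 assume t: "0 < t" "t < 1" and x: "x1 \<in> UU" "x2 \<in> UU"
  have z: "(x1, gm x1) \<in> \<Omega>" "(x2, gm x2) \<in> \<Omega>" using gam_in x by auto
  have "GG ((1 - t) *\<^sub>R x1 + t *\<^sub>R x2) \<le> HH ((1 - t) *\<^sub>R x1 + t *\<^sub>R x2) ((1 - t) *\<^sub>R gm x1 + t *\<^sub>R gm x2)"
    by (rule G_le[OF mid_in[OF z]]) (use t in auto)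
  also have "\<dots> \<le> (1 - t) * HH x1 (gm x1) + t * HH x2 (gm x2) - \<sigma> * t * (1 - t) * (norm (gm x1 - gm x2))\<^sup>2"
    by (rule strong[OF z]) (use t in auto)
  also have "\<dots> \<le> (1 - t) * GG x1 + t * GG x2"
    using G_eq x t spos by simp
  finally show "GG ((1 - t) *\<^sub>R x1 + t *\<^sub>R x2) \<le> (1 - t) * GG x1 + t * GG x2" .
qed

lemma gam_unique: "x \<in> UU \<Longrightarrow> y \<in> argmin_set f \<Omega> x \<Longrightarrow> y = gm x"
proof -
  assume x: "x \<in> UU" and y: "y \<in> argmin_set f \<Omega> x"
  have xy: "(x, y) \<in> \<Omega>" using y by (simp add: argmin_set_def fibre_def)
  have ymin: "f (x, y) \<le> f (x, gm x)" using y gam_in[OF x] by (auto simp: argmin_set_def fibre_def)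
  have hy: "HH x y = GG x" using ymin gam_min[OF x xy] G_eq[OF x] by simp
  have "GG ((1 - 1/2) *\<^sub>R x + (1/2) *\<^sub>R x) \<le> HH ((1 - 1/2) *\<^sub>R x + (1/2) *\<^sub>R x) ((1 - 1/2) *\<^sub>R y + (1/2) *\<^sub>R gm x)"
    by (rule G_le) (rule mid_in[OF xy gam_in[OF x]], auto)
  then have "GG x \<le> HH ((1 - 1/2) *\<^sub>R x + (1/2) *\<^sub>R x) ((1 - 1/2) *\<^sub>R y + (1/2) *\<^sub>R gm x)"
    by (simp add: scaleR_left_distrib[symmetric])
  also have "\<dots> \<le> (1 - 1/2) * HH x y + (1/2) * HH x (gm x) - \<sigma> * (1/2) * (1 - 1/2) * (norm (y - gm x))\<^sup>2"
    by (rule strong[OF xy gam_in[OF x]]) auto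
  finally have "\<sigma> * (norm (y - gm x))\<^sup>2 \<le> 0" using hy G_eq[OF x] by (simp add: algebra_simps)
  then have "(norm (y - gm x))\<^sup>2 \<le> 0" using spos by (simp add: mult_le_0_iff)
  then show ?thesis by simp
qed

lemma gam_mid:
  assumes x: "x1 \<in> UU" "x2 \<in> UU"
  shows "\<sigma> / 4 * (norm (gm x1 - gm x2))\<^sup>2 \<le> (GG x1 + GG x2) / 2 - GG ((1/2) *\<^sub>R (x1 + x2))"
proof -
  have z: "(x1, gm x1) \<in> \<Omega>" "(x2, gm x2) \<in> \<Omega>" using gam_in x by auto
  have e: "(1 - 1/2) *\<^sub>R x1 + (1/2::real) *\<^sub>R x2 = (1/2) *\<^sub>R (x1 + x2)" by (simp add: scaleR_right_distrib)
  have "GG ((1 - 1/2) *\<^sub>R x1 + (1/2) *\<^sub>R x2) \<le> HH ((1 - 1/2) *\<^sub>R x1 + (1/2) *\<^sub>R x2) ((1 - 1/2) *\<^sub>R gm x1 + (1/2) *\<^sub>R gm x2)"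
    by (rule G_le[OF mid_in[OF z]]) auto
  also have "\<dots> \<le> (1 - 1/2) * HH x1 (gm x1) + (1/2) * HH x2 (gm x2) - \<sigma> * (1/2) * (1 - 1/2) * (norm (gm x1 - gm x2))\<^sup>2"
    by (rule strong[OF z]) auto
  finally show ?thesis using G_eq x e by (simp add: algebra_simps)
qed

lemmas facts = U_convex G_convex gam_mid

lemma subgrad:
  assumes x: "x \<in> UU" and u: "u \<in> semi_subdiff \<kappa> gg x" and z: "z \<in> UU"
  shows "GG x + inner (u + \<kappa> *\<^sub>R x) (z - x) \<le> GG z"
proof -
  define p where "p = u + \<kappa> *\<^sub>R x"
  from u obtain e where e: "e > 0" and loc: "\<And>x'. dist x' x < e \<Longrightarrow>
      gg x' - gg x \<ge> inner u (x' - x) - \<kappa> / 2 * (norm (x' - x))\<^sup>2"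
    unfolding semi_subdiff_def by blast
  have local: "GG x + inner p (x' - x) \<le> GG x'" if "dist x' x < e" for x'
  proof -
    have "(norm x')\<^sup>2 = (norm x)\<^sup>2 + 2 * inner x (x' - x) + (norm (x' - x))\<^sup>2"
      using norm_sq_shift[of x "x' - x"] by simp
    then have k: "\<kappa>/2 * (norm x')\<^sup>2 = \<kappa>/2 * (norm x)\<^sup>2 + \<kappa> * inner x (x' - x) + \<kappa>/2 * (norm (x' - x))\<^sup>2"
      by (simp only: ring_distribs)
    have ip: "inner p (x' - x) = inner u (x' - x) + \<kappa> * inner x (x' - x)"
      by (simp add: p_def inner_add_left)
    have "GG x' = gg x' + \<kappa>/2 * (norm x')\<^sup>2" "GG x = gg x + \<kappa>/2 * (norm x)\<^sup>2"
      by (simp_all add: Gfun_def)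
    then show ?thesis using loc[OF that] k ip by linarith
  qed
  show ?thesis
  proof (cases "z = x")
    case True then show ?thesis by (simp add: p_def[symmetric])
  next
    case False
    then have nz: "norm (z - x) > 0" by simp
    define t where "t = min 1 (e / (2 * norm (z - x)))"
    have t: "0 < t" "t \<le> 1" using e nz by (auto simp: t_def)
    have "t * norm (z - x) \<le> e / (2 * norm (z - x)) * norm (z - x)"
      using nz by (intro mult_right_mono) (auto simp: t_def)
    also have "\<dots> = e / 2" using nz by simp
    finally have tn: "t * norm (z - x) < e" using e by linarith
    define xt where "xt = (1 - t) *\<^sub>R x + t *\<^sub>R z"
    have xt_eq: "xt - x = t *\<^sub>R (z - x)" by (simp add: xt_def algebra_simps)
    have "dist xt x < e" using tn t by (simp add: dist_norm xt_eq)
    then have "GG x + inner p (xt - x) \<le> GG xt" by (rule local)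
    then have A: "GG x + t * inner p (z - x) \<le> GG xt" by (simp add: xt_eq)
    have "GG xt \<le> (1 - t) * GG x + t * GG z"
      unfolding xt_def using convex_onD[OF facts(2)] t x z by simp
    with A have "t * (GG x + inner p (z - x)) \<le> t * GG z" by (simp add: algebra_simps)
    then show ?thesis using t by (simp add: p_def)
  qed
qed

lemma gam_lip_sq:
  assumes x1: "x1 \<in> UU" and u1: "u1 \<in> semi_subdiff \<kappa> gg x1"
    and x2: "x2 \<in> UU" and u2: "u2 \<in> semi_subdiff \<kappa> gg x2"
  shows "\<sigma> * (norm (gm x1 - gm x2))\<^sup>2 \<le> inner ((u1 + \<kappa> *\<^sub>R x1) - (u2 + \<kappa> *\<^sub>R x2)) (x1 - x2)"
proof -
  define m where "m = (1/2) *\<^sub>R (x1 + x2)"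
  define p1 where "p1 = u1 + \<kappa> *\<^sub>R x1"
  define p2 where "p2 = u2 + \<kappa> *\<^sub>R x2"
  have mU: "m \<in> UU" unfolding m_def
    using convexD[OF facts(1) x1 x2, of "1/2" "1/2"] by (simp add: scaleR_right_distrib half_half)
  have a: "GG x1 + inner p1 (m - x1) \<le> GG m" unfolding p1_def by (rule subgrad[OF x1 u1 mU])
  have b: "GG x2 + inner p2 (m - x2) \<le> GG m" unfolding p2_def by (rule subgrad[OF x2 u2 mU])
  have e1: "m - x1 = (1/2) *\<^sub>R (x2 - x1)" "m - x2 = (1/2) *\<^sub>R (x1 - x2)"
    by (simp_all add: m_def algebra_simps half_half)
  have "inner p1 (m - x1) + inner p2 (m - x2) = - (1/2) * inner (p1 - p2) (x1 - x2)"
    unfolding e1 by (simp add: inner_diff_left inner_diff_right algebra_simps)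
  moreover have gen: "\<And>g1 g2 gm A B Q :: real. g1 + A \<le> gm \<Longrightarrow> g2 + B \<le> gm \<Longrightarrow>
      A + B = - (1/2) * Q \<Longrightarrow> (g1 + g2) / 2 - gm \<le> (1/4) * Q" by (simp add: field_simps)
  ultimately have "(GG x1 + GG x2) / 2 - GG m \<le> (1/4) * inner (p1 - p2) (x1 - x2)"
    using a b by blast
  with facts(3)[OF x1 x2] show ?thesis by (simp add: m_def p1_def p2_def)
qed

lemma gam_lip:
  assumes x1: "x1 \<in> UU" and u1: "u1 \<in> semi_subdiff \<kappa> gg x1"
    and x2: "x2 \<in> UU" and u2: "u2 \<in> semi_subdiff \<kappa> gg x2"
  shows "dist (gm x1) (gm x2) \<le> sqrt ((1 + \<kappa>) / \<sigma>) * dist (x1, u1) (x2, u2)"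
proof -
  define d where "d = dist (x1, u1) (x2, u2)"
  have dx: "norm (x1 - x2) \<le> d" using dist_fst_le[of "(x1,u1)" "(x2,u2)"] by (simp add: d_def dist_norm)
  have d0: "d \<ge> 0" by (simp add: d_def)
  have du: "norm (u1 - u2) \<le> d" using dist_snd_le[of "(x1,u1)" "(x2,u2)"] by (simp add: d_def dist_norm)
  have "norm ((u1 + \<kappa> *\<^sub>R x1) - (u2 + \<kappa> *\<^sub>R x2)) = norm ((u1 - u2) + \<kappa> *\<^sub>R (x1 - x2))"
    by (simp add: algebra_simps)
  also have "\<dots> \<le> norm (u1 - u2) + \<kappa> * norm (x1 - x2)"
    using norm_triangle_ineq[of "u1 - u2" "\<kappa> *\<^sub>R (x1 - x2)"] kpos by simp
  also have "\<dots> \<le> (1 + \<kappa>) * d"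
  proof -
    have "\<kappa> * norm (x1 - x2) \<le> \<kappa> * d" using dx kpos by (rule mult_left_mono)
    then show ?thesis using du by (simp add: algebra_simps)
  qed
  finally have dp: "norm ((u1 + \<kappa> *\<^sub>R x1) - (u2 + \<kappa> *\<^sub>R x2)) \<le> (1 + \<kappa>) * d" .
  have "\<sigma> * (norm (gm x1 - gm x2))\<^sup>2 \<le> inner ((u1 + \<kappa> *\<^sub>R x1) - (u2 + \<kappa> *\<^sub>R x2)) (x1 - x2)"
    by (rule gam_lip_sq[OF assms])
  also have "\<dots> \<le> norm ((u1 + \<kappa> *\<^sub>R x1) - (u2 + \<kappa> *\<^sub>R x2)) * norm (x1 - x2)"
    by (rule norm_cauchy_schwarz)
  also have "\<dots> \<le> ((1 + \<kappa>) * d) * d"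
    using dp dx kpos d0 by (intro mult_mono) auto
  finally have "(norm (gm x1 - gm x2))\<^sup>2 \<le> (1 + \<kappa>) / \<sigma> * d\<^sup>2"
    using spos by (simp add: field_simps power2_eq_square)
  then have le: "sqrt ((norm (gm x1 - gm x2))\<^sup>2) \<le> sqrt ((1 + \<kappa>) / \<sigma> * d\<^sup>2)"
    by (rule real_sqrt_le_mono)
  have e1: "sqrt ((norm (gm x1 - gm x2))\<^sup>2) = norm (gm x1 - gm x2)" by simp
  have e2: "sqrt ((1 + \<kappa>) / \<sigma> * d\<^sup>2) = sqrt ((1 + \<kappa>) / \<sigma>) * d"
    using d0 by (simp only: real_sqrt_mult) simp
  have "norm (gm x1 - gm x2) \<le> sqrt ((1 + \<kappa>) / \<sigma>) * d" using le unfolding e1 e2 .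
  then show ?thesis by (simp add: dist_norm d_def)
qed

lemma part2:
  "\<exists>\<phi> :: 'n \<times> 'n \<Rightarrow> 'm. \<exists>L. L-lipschitz_on UNIV \<phi> \<and>
     (\<forall>x u. x \<in> UU \<and> u \<in> semi_subdiff \<kappa> gg x \<longrightarrow> gm x = \<phi> (x, u))"
proof -
  define D where "D = {p :: 'n \<times> 'n. fst p \<in> UU \<and> snd p \<in> semi_subdiff \<kappa> gg (fst p)}"
  have "(sqrt ((1 + \<kappa>) / \<sigma>))-lipschitz_on D (\<lambda>p. gm (fst p))"
  proof (rule lipschitz_onI)
    fix p q assume "p \<in> D" "q \<in> D"
    then show "dist (gm (fst p)) (gm (fst q)) \<le> sqrt ((1 + \<kappa>) / \<sigma>) * dist p q"
      using gam_lip[of "fst p" "snd p" "fst q" "snd q"] by (simp add: D_def)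
  qed (use kpos spos in simp)
  from lipschitz_extend[OF this] obtain \<phi> :: "'n \<times> 'n \<Rightarrow> 'm" where
    "(real DIM('m) * sqrt ((1 + \<kappa>) / \<sigma>))-lipschitz_on UNIV \<phi>" "\<forall>z\<in>D. \<phi> z = gm (fst z)"
    by blast
  then show ?thesis by (intro exI[of _ \<phi>] exI[of _ "real DIM('m) * sqrt ((1 + \<kappa>) / \<sigma>)"]) (auto simp: D_def)
qed


abbreviation "Dlt b x0 s \<equiv> GG (x0 + s *\<^sub>R b) + GG (x0 - s *\<^sub>R b) - 2 * GG x0"
abbreviation "goodp b x0 \<equiv> (\<exists>C \<delta>. \<delta> > 0 \<and> (\<forall>s. \<bar>s\<bar> < \<delta> \<longrightarrow> Dlt b x0 s \<le> C * s\<^sup>2))"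

lemma G_cont: "continuous_on UU GG"
  by (rule convex_on_continuous[OF U_open G_convex])

lemma ball_sub: "x0 \<in> UU \<Longrightarrow> \<exists>r>0. ball x0 r \<subseteq> UU"
  using U_open open_contains_ball by blast

lemma Dl_mono:
  assumes x0: "ball x0 r \<subseteq> UU" and b: "b \<in> Basis" and tq: "0 < t" "t \<le> q" "q < r"
  shows "Dlt b x0 t \<le> Dlt b x0 q"
proof -
  have nb: "norm b = 1" using b by simp
  have inU: "x0 + c *\<^sub>R b \<in> UU" if "\<bar>c\<bar> < r" for c
    using x0 that nb by (auto simp: dist_norm subset_iff)
  have p1: "x0 + q *\<^sub>R b \<in> UU" "x0 - q *\<^sub>R b \<in> UU" "x0 \<in> UU"
    using inU[of q] inU[of "-q"] inU[of 0] tq by auto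
  define l where "l = t / q"
  have l: "0 \<le> l" "l \<le> 1" using tq by (auto simp: l_def)
  have e1: "x0 + t *\<^sub>R b = (1 - l) *\<^sub>R x0 + l *\<^sub>R (x0 + q *\<^sub>R b)"
    using tq by (simp add: l_def algebra_simps)
  have e2: "x0 - t *\<^sub>R b = (1 - l) *\<^sub>R x0 + l *\<^sub>R (x0 - q *\<^sub>R b)"
    using tq by (simp add: l_def algebra_simps)
  have a1: "GG (x0 + t *\<^sub>R b) \<le> (1 - l) * GG x0 + l * GG (x0 + q *\<^sub>R b)"
    unfolding e1 by (rule convex_onD[OF G_convex l p1(3) p1(1)])
  have a2: "GG (x0 - t *\<^sub>R b) \<le> (1 - l) * GG x0 + l * GG (x0 - q *\<^sub>R b)"
    unfolding e2 by (rule convex_onD[OF G_convex l p1(3) p1(2)])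
  have e3: "x0 = (1 - 1/2) *\<^sub>R (x0 + q *\<^sub>R b) + (1/2) *\<^sub>R (x0 - q *\<^sub>R b)"
    by (simp add: algebra_simps half_half)
  have "GG x0 \<le> (1 - 1/2) * GG (x0 + q *\<^sub>R b) + (1/2) * GG (x0 - q *\<^sub>R b)"
    by (subst e3, rule convex_onD[OF G_convex _ _ p1(1) p1(2)]) auto
  then have nn: "0 \<le> Dlt b x0 q" by simp
  have "Dlt b x0 t \<le> l * Dlt b x0 q" using a1 a2 by (simp add: algebra_simps)
  also have "\<dots> \<le> Dlt b x0 q" using l nn by (simp add: mult_left_le_one_le)
  finally show ?thesis .
qed

lemma Sb_borel:
  assumes b: "b \<in> Basis"
  shows "{x0 \<in> UU. \<not> goodp b x0} \<in> sets borel"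
proof -
  define A where "A n k q = (if 0 < real_of_rat q \<and> real_of_rat q < 1 / (real k + 1) then
      {x. x \<in> UU \<and> x + real_of_rat q *\<^sub>R b \<in> UU \<and> x - real_of_rat q *\<^sub>R b \<in> UU \<and>
          real n * (real_of_rat q)\<^sup>2 < Dlt b x (real_of_rat q)} else {})" for n k :: nat and q :: rat
  have Aopen: "open (A n k q)" for n k q
  proof (cases "0 < real_of_rat q \<and> real_of_rat q < 1 / (real k + 1)")
    case True
    define c where "c = real_of_rat q"
    define W where "W = UU \<inter> (\<lambda>x. x + c *\<^sub>R b) -` UU \<inter> (\<lambda>x. x - c *\<^sub>R b) -` UU"
    have Wo: "open W" unfolding W_def
      by (intro open_Int U_open continuous_open_vimage) (auto intro!: continuous_intros)
    have cW: "continuous_on W (\<lambda>x. Dlt b x c)"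
    proof -
      have c1: "continuous_on W (\<lambda>x. GG (x + c *\<^sub>R b))"
        by (rule continuous_on_compose2[OF G_cont]) (auto simp: W_def intro!: continuous_intros)
      have c2: "continuous_on W (\<lambda>x. GG (x - c *\<^sub>R b))"
        by (rule continuous_on_compose2[OF G_cont]) (auto simp: W_def intro!: continuous_intros)
      have c3: "continuous_on W GG" by (rule continuous_on_subset[OF G_cont]) (auto simp: W_def)
      show ?thesis by (intro continuous_intros c1 c2 c3)
    qed
    have "A n k q = {x. x \<in> UU \<and> x + c *\<^sub>R b \<in> UU \<and> x - c *\<^sub>R b \<in> UU \<and> real n * c\<^sup>2 < Dlt b x c}"
      using True unfolding A_def c_def by (simp only: True simp_thms if_True)
    also have "\<dots> = (\<lambda>x. Dlt b x c) -` {real n * c\<^sup>2 <..} \<inter> W"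
      unfolding W_def by blast
    finally have Aeq: "A n k q = (\<lambda>x. Dlt b x c) -` {real n * c\<^sup>2 <..} \<inter> W" .
    have "\<forall>B. open B \<longrightarrow> open ((\<lambda>x. Dlt b x c) -` B \<inter> W)"
      using continuous_on_open_vimage[OF Wo, THEN iffD1, OF cW] .
    then have "open ((\<lambda>x. Dlt b x c) -` {real n * c\<^sup>2 <..} \<inter> W)"
      by simp
    with Aeq show ?thesis by simp
  next
    case False
    then have "A n k q = {}" unfolding A_def by (rule if_not_P)
    then show ?thesis by simp
  qed
  have eq: "{x0 \<in> UU. \<not> goodp b x0} = UU \<inter> (\<Inter>n. \<Inter>k. \<Union>q. A n k q)"
  proof (intro equalityI subsetI)
    fix x0 assume "x0 \<in> {x0 \<in> UU. \<not> goodp b x0}"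
    then have x0: "x0 \<in> UU" and ng: "\<not> goodp b x0" by auto
    obtain r where r: "r > 0" "ball x0 r \<subseteq> UU" using ball_sub[OF x0] by blast
    have nb: "norm b = 1" using b by simp
    have inU: "x0 + c *\<^sub>R b \<in> UU" if "\<bar>c\<bar> < r" for c
      using r that nb by (auto simp: dist_norm subset_iff)
    have "x0 \<in> (\<Union>q. A n k q)" for n k
    proof -
      define \<delta> where "\<delta> = min (r / 2) (1 / (2 * (real k + 1)))"
      have \<delta>: "\<delta> > 0" using r by (simp add: \<delta>_def)
      have "\<not> (\<forall>s. \<bar>s\<bar> < \<delta> \<longrightarrow> Dlt b x0 s \<le> (4 * real n) * s\<^sup>2)"
      proof
        assume "\<forall>s. \<bar>s\<bar> < \<delta> \<longrightarrow> Dlt b x0 s \<le> (4 * real n) * s\<^sup>2"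
        with \<delta> have "goodp b x0" by blast
        with ng show False by contradiction
      qed
      then obtain s where s: "\<bar>s\<bar> < \<delta>" "(4 * real n) * s\<^sup>2 < Dlt b x0 s" by (auto simp: not_le)
      define t where "t = \<bar>s\<bar>"
      have Dlt: "Dlt b x0 t = Dlt b x0 s" by (cases "s \<ge> 0") (auto simp: t_def)
      have "t \<noteq> 0" using s by (auto simp: t_def)
      then have t0: "t > 0" by (simp add: t_def)
      obtain q :: rat where q: "t < real_of_rat q" "real_of_rat q < 2 * t"
        using of_rat_dense[of t "2 * t"] t0 by auto
      have t\<delta>: "t < \<delta>" using s by (simp add: t_def)
      define aa where "aa = 1 / (2 * (real k + 1))"
      define bb where "bb = 1 / (real k + 1)"
      have d1: "\<delta> \<le> r / 2" "\<delta> \<le> aa" by (simp_all add: \<delta>_def aa_def)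
      have d2: "2 * aa = bb" by (simp add: aa_def bb_def divide_simps)
      have qr1: "real_of_rat q < r" using q t\<delta> d1 by linarith
      have "real_of_rat q < bb" using q t\<delta> d1 d2 by linarith
      then have qr: "real_of_rat q < r" "real_of_rat q < 1 / (real k + 1)" using qr1 by (simp_all add: bb_def)
      have "Dlt b x0 t \<le> Dlt b x0 (real_of_rat q)"
        by (rule Dl_mono[OF r(2) b t0]) (use q qr in auto)
      moreover have "real n * (real_of_rat q)\<^sup>2 \<le> (4 * real n) * t\<^sup>2"
      proof -
        have q0: "0 \<le> real_of_rat q" using q t0 by linarith
        have "real_of_rat q \<le> 2 * t" using q by linarith
        then have "(real_of_rat q)\<^sup>2 \<le> (2 * t)\<^sup>2" using q0 by (rule power_mono)
        then have "real n * (real_of_rat q)\<^sup>2 \<le> real n * (2 * t)\<^sup>2" by (rule mult_left_mono) simp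
        then show ?thesis by (simp add: power_mult_distrib)
      qed
      moreover have "(4 * real n) * t\<^sup>2 < Dlt b x0 t" using s Dlt by (simp add: t_def)
      ultimately have "real n * (real_of_rat q)\<^sup>2 < Dlt b x0 (real_of_rat q)" by linarith
      moreover have "x0 + real_of_rat q *\<^sub>R b \<in> UU" "x0 - real_of_rat q *\<^sub>R b \<in> UU"
      proof -
        have qa: "\<bar>real_of_rat q\<bar> < r" "\<bar>- real_of_rat q\<bar> < r" using q qr t0 by linarith+
        show "x0 + real_of_rat q *\<^sub>R b \<in> UU" by (rule inU[OF qa(1)])
        show "x0 - real_of_rat q *\<^sub>R b \<in> UU" using inU[OF qa(2)] by simp
      qed
      moreover have "0 < real_of_rat q" using q t0 by linarith
      ultimately have "x0 \<in> A n k q" using x0 qr by (simp add: A_def)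
      then show ?thesis by blast
    qed
    then show "x0 \<in> UU \<inter> (\<Inter>n. \<Inter>k. \<Union>q. A n k q)" using x0 by blast
  next
    fix x0 assume x0A: "x0 \<in> UU \<inter> (\<Inter>n. \<Inter>k. \<Union>q. A n k q)"
    then have x0: "x0 \<in> UU" by blast
    have "\<not> goodp b x0"
    proof
      assume "goodp b x0"
      then obtain C \<delta> where C: "\<delta> > 0" "\<And>s. \<bar>s\<bar> < \<delta> \<Longrightarrow> Dlt b x0 s \<le> C * s\<^sup>2" by blast
      obtain n :: nat where n: "C \<le> real n" using real_arch_simple by blast
      obtain k :: nat where k: "inverse (real (Suc k)) < \<delta>" using reals_Archimedean[OF C(1)] by blast
      from x0A obtain q where "x0 \<in> A n k q" by blast
      then have q: "0 < real_of_rat q" "real_of_rat q < 1 / (real k + 1)"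
        and lt: "real n * (real_of_rat q)\<^sup>2 < Dlt b x0 (real_of_rat q)"
        by (auto simp: A_def split: if_splits)
      have "\<bar>real_of_rat q\<bar> < \<delta>" using q k by (simp add: inverse_eq_divide add.commute)
      then have "Dlt b x0 (real_of_rat q) \<le> C * (real_of_rat q)\<^sup>2" by (rule C(2))
      also have "\<dots> \<le> real n * (real_of_rat q)\<^sup>2" using n by (intro mult_right_mono) auto
      finally show False using lt by linarith
    qed
    then show "x0 \<in> {x0 \<in> UU. \<not> goodp b x0}" using x0 by blast
  qed
  have "(\<Union>q. A n k q) \<in> sets borel" for n k
    using Aopen by (intro sets.countable_UN) auto
  then have "(\<Inter>n. \<Inter>k. \<Union>q. A n k q) \<in> sets borel"
    by (intro sets.countable_INT) auto
  moreover have "UU \<in> sets borel" using U_open by simp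
  ultimately show ?thesis unfolding eq by (rule sets.Int[rotated])
qed


lemma slice_negl:
  assumes b: "b \<in> Basis"
  shows "negligible {t::real. x + t *\<^sub>R b \<in> {x0 \<in> UU. \<not> goodp b x0}}"
proof -
  define I where "I = {t::real. x + t *\<^sub>R b \<in> UU}"
  define \<phi> where "\<phi> t = GG (x + t *\<^sub>R b)" for t
  have Io: "open I" unfolding I_def
    using continuous_open_vimage[OF U_open, of "\<lambda>t. x + t *\<^sub>R b"]
    by (auto intro!: continuous_intros simp: vimage_def)
  have aff: "x + ((1 - u) * t1 + u * t2) *\<^sub>R b = (1 - u) *\<^sub>R (x + t1 *\<^sub>R b) + u *\<^sub>R (x + t2 *\<^sub>R b)"
    for u t1 t2 :: real by (simp add: algebra_simps)
  have Ic: "convex I"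
  proof (rule convexI)
    fix t1 t2 u v :: real assume t: "t1 \<in> I" "t2 \<in> I" "0 \<le> u" "0 \<le> v" "u + v = 1"
    have "u *\<^sub>R (x + t1 *\<^sub>R b) + v *\<^sub>R (x + t2 *\<^sub>R b) \<in> UU"
      using convexD[OF U_convex, of "x + t1 *\<^sub>R b" "x + t2 *\<^sub>R b" u v] t by (simp add: I_def)
    moreover have "u *\<^sub>R (x + t1 *\<^sub>R b) + v *\<^sub>R (x + t2 *\<^sub>R b) = (u + v) *\<^sub>R x + (u * t1 + v * t2) *\<^sub>R b"
      by (simp add: algebra_simps)
    ultimately show "u *\<^sub>R t1 + v *\<^sub>R t2 \<in> I"
      using t(5) by (simp add: I_def)
  qed
  have \<phi>c: "convex_on I \<phi>"
  proof (rule convex_onI[OF _ Ic])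
    fix u t1 t2 :: real assume u: "0 < u" "u < 1" and t: "t1 \<in> I" "t2 \<in> I"
    have "GG ((1 - u) *\<^sub>R (x + t1 *\<^sub>R b) + u *\<^sub>R (x + t2 *\<^sub>R b)) \<le> (1 - u) * GG (x + t1 *\<^sub>R b) + u * GG (x + t2 *\<^sub>R b)"
      using convex_onD[OF G_convex, of u] u t by (auto simp: I_def)
    then show "\<phi> ((1 - u) *\<^sub>R t1 + u *\<^sub>R t2) \<le> (1 - u) * \<phi> t1 + u * \<phi> t2"
      using aff[of u t1 t2] by (simp add: \<phi>_def)
  qed
  have e1: "x + t *\<^sub>R b + s *\<^sub>R b = x + (t + s) *\<^sub>R b" "x + t *\<^sub>R b - s *\<^sub>R b = x + (t - s) *\<^sub>R b"
    for t s :: real by (simp_all add: algebra_simps)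
  have "{t::real. x + t *\<^sub>R b \<in> {x0 \<in> UU. \<not> goodp b x0}} =
        {t \<in> I. \<not> (\<exists>C \<delta>. \<delta> > 0 \<and> (\<forall>s. \<bar>s\<bar> < \<delta> \<longrightarrow> \<phi> (t + s) + \<phi> (t - s) - 2 * \<phi> t \<le> C * s\<^sup>2))}"
    by (simp add: I_def \<phi>_def e1)
  then show ?thesis using oned_global[OF Io \<phi>c] by simp
qed

lemma Sb_null: "b \<in> Basis \<Longrightarrow> {x0 \<in> UU. \<not> goodp b x0} \<in> null_sets lborel"
  by (rule line_null[OF Sb_borel slice_negl])

lemma calm:
  assumes x0: "x0 \<in> UU" and gd: "\<forall>b\<in>Basis. goodp b x0"
  shows "\<exists>C \<delta>. \<delta> > 0 \<and> (\<forall>x \<in> UU. norm (x - x0) < \<delta> \<longrightarrow> norm (gm x - gm x0) \<le> C * norm (x - x0))"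
proof -
  obtain r where r: "r > 0" "ball x0 r \<subseteq> UU" using ball_sub[OF x0] by blast
  from gd obtain Cf where "\<forall>b\<in>Basis. \<exists>\<delta>. \<delta> > 0 \<and> (\<forall>s. \<bar>s\<bar> < \<delta> \<longrightarrow> Dlt b x0 s \<le> Cf b * s\<^sup>2)"
    using bchoice[of Basis "\<lambda>b C. \<exists>\<delta>. \<delta> > 0 \<and> (\<forall>s. \<bar>s\<bar> < \<delta> \<longrightarrow> Dlt b x0 s \<le> C * s\<^sup>2)"] by blast
  then obtain \<delta>f where \<delta>f: "\<forall>b\<in>Basis. \<delta>f b > 0 \<and> (\<forall>s. \<bar>s\<bar> < \<delta>f b \<longrightarrow> Dlt b x0 s \<le> Cf b * s\<^sup>2)"
    using bchoice[of Basis "\<lambda>b \<delta>. \<delta> > 0 \<and> (\<forall>s. \<bar>s\<bar> < \<delta> \<longrightarrow> Dlt b x0 s \<le> Cf b * s\<^sup>2)"] by blast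
  define R where "R = min r (Min (\<delta>f ` Basis))"
  have R0: "R > 0" using r \<delta>f by (simp add: R_def)
  have Rr: "R \<le> r" by (simp add: R_def)
  have R\<delta>: "R \<le> \<delta>f b" if "b \<in> Basis" for b
    using that by (simp add: R_def min.coboundedI2)
  define C where "C = (\<Sum>b\<in>Basis. \<bar>Cf b\<bar>)"
  have C0: "C \<ge> 0" by (simp add: C_def sum_nonneg)
  have CC: "Cf b \<le> C" if "b \<in> Basis" for b
  proof -
    have "\<bar>Cf b\<bar> \<le> C" unfolding C_def by (rule member_le_sum[OF that]) auto
    then show ?thesis by linarith
  qed
  define w where "w z = GG (x0 + z) + GG (x0 - z) - 2 * GG x0" for z
  have inU: "x0 + z \<in> UU" "x0 - z \<in> UU" if "norm z < r" for z
    using r that by (auto simp: dist_norm subset_iff)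
  have wc: "convex_on (ball 0 R) w"
  proof (rule convex_onI)
    fix u :: real and z1 z2 :: 'n assume u: "0 < u" "u < 1" and z: "z1 \<in> ball 0 R" "z2 \<in> ball 0 R"
    have n: "norm z1 < r" "norm z2 < r" using z Rr by auto
    have e: "x0 + ((1 - u) *\<^sub>R z1 + u *\<^sub>R z2) = (1 - u) *\<^sub>R (x0 + z1) + u *\<^sub>R (x0 + z2)"
            "x0 - ((1 - u) *\<^sub>R z1 + u *\<^sub>R z2) = (1 - u) *\<^sub>R (x0 - z1) + u *\<^sub>R (x0 - z2)"
      by (simp_all add: algebra_simps)
    have a: "GG (x0 + ((1 - u) *\<^sub>R z1 + u *\<^sub>R z2)) \<le> (1 - u) * GG (x0 + z1) + u * GG (x0 + z2)"
      unfolding e(1) by (rule convex_onD[OF G_convex]) (use u inU n in auto)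
    have b: "GG (x0 - ((1 - u) *\<^sub>R z1 + u *\<^sub>R z2)) \<le> (1 - u) * GG (x0 - z1) + u * GG (x0 - z2)"
      unfolding e(2) by (rule convex_onD[OF G_convex]) (use u inU n in auto)
    show "w ((1 - u) *\<^sub>R z1 + u *\<^sub>R z2) \<le> (1 - u) * w z1 + u * w z2"
      using a b by (simp add: w_def algebra_simps)
  qed simp
  have ax: "w (t *\<^sub>R b) \<le> C * t\<^sup>2" if "b \<in> Basis" "\<bar>t\<bar> < R" for b t
  proof -
    have "\<bar>t\<bar> < \<delta>f b" using that R\<delta> by force
    then have "Dlt b x0 t \<le> Cf b * t\<^sup>2" using \<delta>f that(1) by blast
    also have "\<dots> \<le> C * t\<^sup>2" using CC[OF that(1)] by (intro mult_right_mono) auto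
    finally show ?thesis by (simp add: w_def)
  qed
  define K where "K = sqrt (2 * C * (real DIM('n))\<^sup>2 / \<sigma>)"
  have D1: "real DIM('n) \<ge> 1" by (simp add: DIM_positive Suc_le_eq)
  have "\<forall>x \<in> UU. norm (x - x0) < R / real DIM('n) \<longrightarrow> norm (gm x - gm x0) \<le> K * norm (x - x0)"
  proof (intro ballI impI)
    fix x assume x: "x \<in> UU" and xn: "norm (x - x0) < R / real DIM('n)"
    have zR: "real DIM('n) * norm (x - x0) < R" using xn D1 by (simp add: field_simps)
    have nR: "norm (x - x0) < R" using zR D1
      by (smt (verit, best) mult_le_cancel_right1 norm_ge_zero)
    have wz: "w (x - x0) \<le> C * (real DIM('n))\<^sup>2 * (norm (x - x0))\<^sup>2"
      by (rule cross_polytope[OF wc C0 ax zR])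
    define m where "m = (1/2) *\<^sub>R (x + x0)"
    have mU: "m \<in> UU" unfolding m_def
      using convexD[OF U_convex x x0, of "1/2" "1/2"] by (simp add: scaleR_right_distrib)
    have x2: "x0 - (x - x0) \<in> UU" using inU(2)[of "x - x0"] nR Rr by simp
    have e3: "x0 = (1 - 1/3) *\<^sub>R m + (1/3) *\<^sub>R (x0 - (x - x0))"
      by (simp add: m_def algebra_simps third_third[symmetric])
    have "GG x0 \<le> (1 - 1/3) * GG m + (1/3) * GG (x0 - (x - x0))"
      by (subst e3, rule convex_onD[OF G_convex _ _ mU x2]) auto
    then have h3: "3 * GG x0 \<le> 2 * GG m + GG (x0 - (x - x0))" by (simp add: field_simps)
    have wx: "w (x - x0) = GG x + GG (x0 - (x - x0)) - 2 * GG x0" by (simp add: w_def)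
    have cv3: "(GG x + GG x0) / 2 - GG m \<le> w (x - x0) / 2"
      unfolding wx using h3 by (simp add: field_simps)
    have "\<sigma> / 4 * (norm (gm x - gm x0))\<^sup>2 \<le> (GG x + GG x0) / 2 - GG m"
      unfolding m_def by (rule gam_mid[OF x x0])
    with cv3 wz have "\<sigma> / 4 * (norm (gm x - gm x0))\<^sup>2 \<le> C * (real DIM('n))\<^sup>2 * (norm (x - x0))\<^sup>2 / 2"
      by linarith
    then have "(norm (gm x - gm x0))\<^sup>2 \<le> (2 * C * (real DIM('n))\<^sup>2 / \<sigma>) * (norm (x - x0))\<^sup>2"
      using spos by (simp add: field_simps)
    then have "sqrt ((norm (gm x - gm x0))\<^sup>2) \<le> sqrt ((2 * C * (real DIM('n))\<^sup>2 / \<sigma>) * (norm (x - x0))\<^sup>2)"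
      by (rule real_sqrt_le_mono)
    then show "norm (gm x - gm x0) \<le> K * norm (x - x0)"
      by (simp only: real_sqrt_mult K_def) simp
  qed
  moreover have "R / real DIM('n) > 0" using R0 by simp
  ultimately show ?thesis by blast
qed

lemma part3:
  "AE x0 in lebesgue. x0 \<in> UU \<longrightarrow>
     (\<exists>C \<delta>. \<delta> > 0 \<and> (\<forall>x \<in> UU. norm (x - x0) < \<delta> \<longrightarrow> norm (gm x - gm x0) \<le> C * norm (x - x0)))"
proof (rule AE_I')
  show "(\<Union>b\<in>Basis. {x0 \<in> UU. \<not> goodp b x0}) \<in> null_sets lebesgue"
    by (rule null_sets_completionI, rule null_sets_UN'[OF countable_finite[OF finite_Basis]], rule Sb_null)
  show "{x0 \<in> space lebesgue. \<not> (x0 \<in> UU \<longrightarrow>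
     (\<exists>C \<delta>. \<delta> > 0 \<and> (\<forall>x \<in> UU. norm (x - x0) < \<delta> \<longrightarrow> norm (gm x - gm x0) \<le> C * norm (x - x0))))}
     \<subseteq> (\<Union>b\<in>Basis. {x0 \<in> UU. \<not> goodp b x0})"
  proof
    fix x0 assume "x0 \<in> {x0 \<in> space lebesgue. \<not> (x0 \<in> UU \<longrightarrow>
     (\<exists>C \<delta>. \<delta> > 0 \<and> (\<forall>x \<in> UU. norm (x - x0) < \<delta> \<longrightarrow> norm (gm x - gm x0) \<le> C * norm (x - x0))))}"
    then have x0: "x0 \<in> UU" and nc: "\<not> (\<exists>C \<delta>. \<delta> > 0 \<and> (\<forall>x \<in> UU. norm (x - x0) < \<delta> \<longrightarrow> norm (gm x - gm x0) \<le> C * norm (x - x0)))"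
      by auto
    show "x0 \<in> (\<Union>b\<in>Basis. {x0 \<in> UU. \<not> goodp b x0})"
    proof (rule ccontr)
      assume "x0 \<notin> (\<Union>b\<in>Basis. {x0 \<in> UU. \<not> goodp b x0})"
      then have "\<forall>b\<in>Basis. goodp b x0" using x0 by blast
      from calm[OF x0 this] nc show False by contradiction
    qed
  qed
qed

end


theorem theorem2p5:
  fixes \<Omega> :: "('n::euclidean_space \<times> 'm::euclidean_space) set"
    and f :: "'n \<times> 'm \<Rightarrow> real"
    and \<kappa> \<sigma> :: real
  assumes "open \<Omega>" and "convex \<Omega>"
    and "\<forall>x. connected (fibre \<Omega> x)"
    and "\<kappa> \<ge> 0" and "\<sigma> > 0"
    and "convex_on \<Omega> (\<lambda>(x, y). f (x, y) + \<kappa> / 2 * (norm x)\<^sup>2 - \<sigma> * (norm y)\<^sup>2)"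
    and "\<forall>x \<in> fst ` \<Omega>. argmin_set f \<Omega> x \<noteq> {}"
  defines "g \<equiv> (\<lambda>x. INF y \<in> fibre \<Omega> x. f (x, y))"
  shows "semiconvex_on \<kappa> (fst ` \<Omega>) g \<and>
    (\<exists>\<gamma> :: 'n \<Rightarrow> 'm.
      (\<forall>x \<in> fst ` \<Omega>. argmin_set f \<Omega> x = {\<gamma> x} \<and> g x = f (x, \<gamma> x)) \<and>
      (\<forall>x0 \<in> fst ` \<Omega>. \<forall>u0 \<in> semi_subdiff \<kappa> g x0.
         \<exists>V :: ('n \<times> 'n) set. \<exists>\<phi> :: 'n \<times> 'n \<Rightarrow> 'm. \<exists>L.
           open V \<and> (x0, u0) \<in> V \<and> L-lipschitz_on V \<phi> \<and>
           (\<forall>x u. (x, u) \<in> V \<and> x \<in> fst ` \<Omega> \<and> u \<in> semi_subdiff \<kappa> g x \<longrightarrow> \<gamma> x = \<phi> (x, u))) \<and>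
      (AE x0 in lebesgue. x0 \<in> fst ` \<Omega> \<longrightarrow>
         (\<exists>C \<delta>. \<delta> > 0 \<and> (\<forall>x \<in> fst ` \<Omega>. norm (x - x0) < \<delta> \<longrightarrow>
            norm (\<gamma> x - \<gamma> x0) \<le> C * norm (x - x0)))))"
proof -
  note A = assms(1) assms(2) assms(4) assms(5) assms(6) assms(7)
  have gdef: "g = gfun \<Omega> f" by (simp add: g_def gfun_def fun_eq_iff)
  have sc: "semiconvex_on \<kappa> (fst ` \<Omega>) g"
    unfolding semiconvex_on_def gdef using G_convex[OF A] by (simp add: Gfun_def[abs_def])
  have p1: "\<forall>x \<in> fst ` \<Omega>. argmin_set f \<Omega> x = {gam \<Omega> f x} \<and> g x = f (x, gam \<Omega> f x)"
  proof
    fix x assume x: "x \<in> fst ` \<Omega>"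
    have "argmin_set f \<Omega> x = {gam \<Omega> f x}"
      using gam_unique[OF A x] gam_mem[OF A x] by blast
    moreover have "g x = f (x, gam \<Omega> f x)" using g_eq[OF A x] by (simp add: gdef)
    ultimately show "argmin_set f \<Omega> x = {gam \<Omega> f x} \<and> g x = f (x, gam \<Omega> f x)" by blast
  qed
  obtain \<phi> :: "'n \<times> 'n \<Rightarrow> 'm" and L where
    \<phi>: "L-lipschitz_on UNIV \<phi>"
       "\<forall>x u. x \<in> fst ` \<Omega> \<and> u \<in> semi_subdiff \<kappa> (gfun \<Omega> f) x \<longrightarrow> gam \<Omega> f x = \<phi> (x, u)"
    using part2[OF A] by blast
  have p2: "\<forall>x0 \<in> fst ` \<Omega>. \<forall>u0 \<in> semi_subdiff \<kappa> g x0.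
         \<exists>V :: ('n \<times> 'n) set. \<exists>\<phi> :: 'n \<times> 'n \<Rightarrow> 'm. \<exists>L.
           open V \<and> (x0, u0) \<in> V \<and> L-lipschitz_on V \<phi> \<and>
           (\<forall>x u. (x, u) \<in> V \<and> x \<in> fst ` \<Omega> \<and> u \<in> semi_subdiff \<kappa> g x \<longrightarrow> gam \<Omega> f x = \<phi> (x, u))"
    using \<phi> unfolding gdef by (intro ballI exI[of _ UNIV] exI[of _ \<phi>] exI[of _ L]) auto
  have p3: "AE x0 in lebesgue. x0 \<in> fst ` \<Omega> \<longrightarrow>
         (\<exists>C \<delta>. \<delta> > 0 \<and> (\<forall>x \<in> fst ` \<Omega>. norm (x - x0) < \<delta> \<longrightarrow>
            norm (gam \<Omega> f x - gam \<Omega> f x0) \<le> C * norm (x - x0)))"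
    by (rule part3[OF A])
  show ?thesis using sc p1 p2 p3 by blast
qed

end
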